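(* Let $G$ be a very well-covered graph with $V(G)=\{x_1,\ldots,x_h,y_1,\ldots,y_h\}$ such that $\{x_1,\ldots,x_h\}$ is a minimal vertex cover, $\{y_1,\ldots,y_h\}$ a maximal independent set and $\{x_i,y_i\}\in E(G)$ for all $i$. Let $s\ge1$, $e_1,\ldots,e_s\in E(G)$, and let $G'$ be the graph associated to $(I(G)^{s+1}:e_1\cdots e_s)$ as in the context. Suppose $(u=p_0)p_1\cdots p_{2k}(p_{2k+1}=v)$, $k\ge1$, is an even-connection in $G$ with respect to $e_1\cdots e_s$. If $\{w,p_i\}\in E(G')$ for some $0\le i\le 2k+1$, then $\{u,w\}\in E(G')$ or $\{v,w\}\in E(G')$.
   Context: $I(G)$ is the edge ideal; edges are identified with the products of their endpoints. $G$ is very well-covered if it has no isolated vertices, all minimal vertex covers have the same size, and this size is $|V(G)|/2$. Even-connection: a sequence $p_0p_1\cdots p_{2k+1}$, $k\ge1$, of vertices with $\{p_r,p_{r+1}\}\in E(G)$ for all $r$, each $\{p_{2\ell+1},p_{2\ell+2}\}$ ($0\le\ell\le k-1$) equal to some $e_m$, and each edge used among these at most as many times as it appears in $e_1,\dots,e_s$; then $p_0,p_{2k+1}$ (possibly equal) are even-connected. $(I(G)^{s+1}:e_1\cdots e_s)$ is minimally generated by $uv$ with $\{u,v\}\in E(G)$ or $u,v$ even-connected; $G'$ is the graph whose edge ideal is the polarization of this ideal (each generator $u^2$ replaced by $uu^*$ with a new vertex $u^*$), so for $u\ne v\in V(G)$, $\{u,v\}\in E(G')$ iff $\{u,v\}\in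 E(G)$ or $u,v$ are even-connected. *)

theory Defs
  imports Main "HOL-Library.Multiset"
begin

definition simple_graph :: "'a set \<Rightarrow> 'a set set \<Rightarrow> bool" where
  "simple_graph V E \<longleftrightarrow> finite V \<and>
     (\<forall>e\<in>E. \<exists>a b. e = {a, b} \<and> a \<noteq> b \<and> a \<in> V \<and> b \<in> V)"

definition vertex_cover :: "'a set \<Rightarrow> 'a set set \<Rightarrow> 'a set \<Rightarrow> bool" where
  "vertex_cover V E C \<longleftrightarrow> C \<subseteq> V \<and> (\<forall>e\<in>E. e \<inter> C \<noteq> {})"

definition minimal_vertex_cover :: "'a set \<Rightarrow> 'a set set \<Rightarrow> 'a set \<Rightarrow> bool" where
  "minimal_vertex_cover V E C \<longleftrightarrow> vertex_cover V E C \<and> (\<forall>D. D \<subset> C \<longrightarrow> \<not> vertex_cover V E D)"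

definition independent_set :: "'a set \<Rightarrow> 'a set set \<Rightarrow> 'a set \<Rightarrow> bool" where
  "independent_set V E S \<longleftrightarrow> S \<subseteq> V \<and> (\<forall>e\<in>E. \<not> e \<subseteq> S)"

definition maximal_independent_set :: "'a set \<Rightarrow> 'a set set \<Rightarrow> 'a set \<Rightarrow> bool" where
  "maximal_independent_set V E S \<longleftrightarrow> independent_set V E S \<and>
     (\<forall>T. S \<subset> T \<longrightarrow> \<not> independent_set V E T)"

definition very_well_covered :: "'a set \<Rightarrow> 'a set set \<Rightarrow> bool" where
  "very_well_covered V E \<longleftrightarrow> simple_graph V E \<and> (\<forall>v\<in>V. \<exists>e\<in>E. v \<in> e) \<and>
     (\<forall>C. minimal_vertex_cover V E C \<longrightarrow> 2 * card C = card V)"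

text \<open>Even-connection p 0, p 1, ..., p (2k+1) with respect to the product of the edges in
  the list es = [e_1,...,e_s] (multiplicities via multisets).\<close>
definition even_connection :: "'a set set \<Rightarrow> 'a set list \<Rightarrow> (nat \<Rightarrow> 'a) \<Rightarrow> nat \<Rightarrow> bool" where
  "even_connection E es p k \<longleftrightarrow> k \<ge> 1 \<and>
     (\<forall>r \<le> 2 * k. {p r, p (Suc r)} \<in> E) \<and>
     (\<forall>l < k. {p (2 * l + 1), p (2 * l + 2)} \<in> set es) \<and>
     mset (map (\<lambda>l. {p (2 * l + 1), p (2 * l + 2)}) [0..<k]) \<subseteq># mset es"

definition even_connected :: "'a set set \<Rightarrow> 'a set list \<Rightarrow> 'a \<Rightarrow> 'a \<Rightarrow> bool" where
  "even_connected E es a b \<longleftrightarrow>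
     (\<exists>p k. even_connection E es p k \<and> p 0 = a \<and> p (2 * k + 1) = b)"

text \<open>a*b is a (minimal) generator of (I(G)^(s+1) : e_1...e_s).  For a \<noteq> b this is exactly
  adjacency in G'; for a = b it means a^2 is a generator, i.e. the edge {a, a*} of G'.\<close>
definition colon_edge :: "'a set set \<Rightarrow> 'a set list \<Rightarrow> 'a \<Rightarrow> 'a \<Rightarrow> bool" where
  "colon_edge E es a b \<longleftrightarrow> {a, b} \<in> E \<or> even_connected E es a b"

end

theory Submission
  imports Defs
begin

definition pairs :: "(nat \<Rightarrow> 'a) \<Rightarrow> nat \<Rightarrow> 'a set list" where
  "pairs p k = map (\<lambda>l. {p (2 * l + 1), p (2 * l + 2)}) [0..<k]"

definition walk :: "'a set set \<Rightarrow> (nat \<Rightarrow> 'a) \<Rightarrow> nat \<Rightarrow> bool" where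
  "walk E p k \<longleftrightarrow> (\<forall>r \<le> 2 * k. {p r, p (Suc r)} \<in> E)"

lemma length_pairs[simp]: "length (pairs p k) = k"
  by (simp add: pairs_def)

lemma nth_pairs[simp]: "l < k \<Longrightarrow> pairs p k ! l = {p (2 * l + 1), p (2 * l + 2)}"
  by (simp add: pairs_def)

lemma set_pairs: "set (pairs p k) = {{p (2 * l + 1), p (2 * l + 2)} | l. l < k}"
  by (auto simp: pairs_def)

lemma ec_iff: "even_connection E es p k \<longleftrightarrow> k \<ge> 1 \<and> walk E p k \<and> mset (pairs p k) \<subseteq># mset es"
proof -
  have "mset (pairs p k) \<subseteq># mset es \<Longrightarrow> (\<forall>l < k. {p (2 * l + 1), p (2 * l + 2)} \<in> set es)"
  proof (intro allI impI)
    fix l assume a: "mset (pairs p k) \<subseteq># mset es" and l: "l < k"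
    have "{p (2 * l + 1), p (2 * l + 2)} \<in> set (pairs p k)" using l by (auto simp: set_pairs)
    then show "{p (2 * l + 1), p (2 * l + 2)} \<in> set es"
      using a by (metis mset_subset_eqD set_mset_mset)
  qed
  then show ?thesis unfolding even_connection_def walk_def pairs_def by auto
qed

lemma mset_take_sub: "mset (take n xs) \<subseteq># mset xs"
  by (metis append_take_drop_id mset_append mset_subset_eq_add_left)

lemma mset_drop_sub: "mset (drop n xs) \<subseteq># mset xs"
  by (metis append_take_drop_id mset_append mset_subset_eq_add_right)

lemma disj_union_sub:
  assumes "A \<subseteq># M" "B \<subseteq># M" "set_mset A \<inter> set_mset B = {}"
  shows "A + B \<subseteq># M"
proof -
  have "count (A + B) x \<le> count M x" for x
  proof (cases "x \<in># A")
    case True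
    then have "count B x = 0" using assms(3) by (meson disjoint_iff not_in_iff)
    then show ?thesis using assms(1) by (simp add: mset_subset_eq_count)
  next
    case False
    then have "count A x = 0" by (meson not_in_iff)
    then show ?thesis using assms(2) by (simp add: mset_subset_eq_count)
  qed
  then show ?thesis by (simp add: mset_subset_eq_count subseteq_mset_def)
qed

lemma L_prefix:
  assumes "walk E p k" "t \<le> k"
  shows "walk E p t" "pairs p t = take t (pairs p k)"
proof -
  show "walk E p t" using assms by (auto simp: walk_def)
  show "pairs p t = take t (pairs p k)"
  proof (rule nth_equalityI)
    show "length (pairs p t) = length (take t (pairs p k))" using assms by simp
    fix l assume "l < length (pairs p t)"
    then show "pairs p t ! l = take t (pairs p k) ! l" using assms by simp
  qed
qed

lemma L_suffix:
  assumes "walk E p k" "t \<le> k"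
  shows "walk E (\<lambda>r. p (2 * t + r)) (k - t)" "pairs (\<lambda>r. p (2 * t + r)) (k - t) = drop t (pairs p k)"
proof -
  show "walk E (\<lambda>r. p (2 * t + r)) (k - t)"
    unfolding walk_def
  proof (intro allI impI)
    fix r assume "r \<le> 2 * (k - t)"
    then have "2 * t + r \<le> 2 * k" using assms by linarith
    then have "{p (2 * t + r), p (Suc (2 * t + r))} \<in> E" using assms(1) unfolding walk_def by blast
    then show "{p (2 * t + r), p (2 * t + Suc r)} \<in> E" by simp
  qed
  show "pairs (\<lambda>r. p (2 * t + r)) (k - t) = drop t (pairs p k)"
  proof (rule nth_equalityI)
    show "length (pairs (\<lambda>r. p (2 * t + r)) (k - t)) = length (drop t (pairs p k))" by simp
    fix l assume "l < length (pairs (\<lambda>r. p (2 * t + r)) (k - t))"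
    then have l: "l < k - t" by simp
    then have "t + l < k" by linarith
    then show "pairs (\<lambda>r. p (2 * t + r)) (k - t) ! l = drop t (pairs p k) ! l"
      using l assms by (simp add: algebra_simps)
  qed
qed

lemma L_rev:
  assumes "walk E p k"
  shows "walk E (\<lambda>r. p (2 * k + 1 - r)) k" "pairs (\<lambda>r. p (2 * k + 1 - r)) k = rev (pairs p k)"
proof -
  show "walk E (\<lambda>r. p (2 * k + 1 - r)) k"
    unfolding walk_def
  proof (intro allI impI)
    fix r assume r: "r \<le> 2 * k"
    define r' where "r' = 2 * k - r"
    have "{p r', p (Suc r')} \<in> E" using assms r unfolding walk_def r'_def by auto
    moreover have "2 * k + 1 - r = Suc r'" "2 * k + 1 - Suc r = r'" using r unfolding r'_def by auto
    ultimately show "{p (2 * k + 1 - r), p (2 * k + 1 - Suc r)} \<in> E" by (simp add: insert_commute)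
  qed
  show "pairs (\<lambda>r. p (2 * k + 1 - r)) k = rev (pairs p k)"
  proof (rule nth_equalityI)
    show "length (pairs (\<lambda>r. p (2 * k + 1 - r)) k) = length (rev (pairs p k))" by simp
    fix l assume "l < length (pairs (\<lambda>r. p (2 * k + 1 - r)) k)"
    then have l: "l < k" by simp
    have e1: "2 * k + 1 - (2 * l + 1) = 2 * (k - 1 - l) + 2" using l by auto
    have e2: "2 * k + 1 - (2 * l + 2) = 2 * (k - 1 - l) + 1" using l by auto
    have "k - 1 - l < k" using l by auto
    moreover have "Suc (2 * (k - Suc l)) = 2 * k - Suc (2 * l)" "Suc (Suc (2 * (k - Suc l))) = 2 * k - 2 * l"
      using l by auto
    ultimately show "pairs (\<lambda>r. p (2 * k + 1 - r)) k ! l = rev (pairs p k) ! l"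
      using l by (simp add: rev_nth insert_commute)
  qed
qed

lemma L_splice:
  assumes A: "\<forall>r < 2 * ja. {a r, a (Suc r)} \<in> E" and B: "walk E b kb"
    and AB: "{a (2 * ja), b 1} \<in> E"
  defines "n \<equiv> \<lambda>r. if r \<le> 2 * ja then a r else b (r - 2 * ja)"
  shows "walk E n (ja + kb)" "pairs n (ja + kb) = pairs a ja @ pairs b kb"
    "n 0 = a 0" "n (2 * (ja + kb) + 1) = b (2 * kb + 1)"
proof -
  show "walk E n (ja + kb)"
    unfolding walk_def
  proof (intro allI impI)
    fix r assume r: "r \<le> 2 * (ja + kb)"
    consider "r < 2 * ja" | "r = 2 * ja" | "r > 2 * ja" by linarith
    then show "{n r, n (Suc r)} \<in> E"
    proof cases
      case 1 then show ?thesis using A by (simp add: n_def)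
    next
      case 2 then show ?thesis using AB by (simp add: n_def)
    next
      case 3
      then have "r - 2 * ja \<le> 2 * kb" "Suc r - 2 * ja = Suc (r - 2 * ja)" using r by auto
      then show ?thesis using 3 B unfolding walk_def n_def by auto
    qed
  qed
  show "pairs n (ja + kb) = pairs a ja @ pairs b kb"
  proof (rule nth_equalityI)
    show "length (pairs n (ja + kb)) = length (pairs a ja @ pairs b kb)" by simp
    fix l assume "l < length (pairs n (ja + kb))"
    then have l: "l < ja + kb" by simp
    show "pairs n (ja + kb) ! l = (pairs a ja @ pairs b kb) ! l"
    proof (cases "l < ja")
      case True then show ?thesis using l by (simp add: nth_append n_def)
    next
      case False
      then have "2 * l + 1 - 2 * ja = 2 * (l - ja) + 1" "2 * l + 2 - 2 * ja = 2 * (l - ja) + 2"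
        "l - ja < kb" using l by auto
      then show ?thesis using l False by (simp add: nth_append n_def)
    qed
  qed
  show "n 0 = a 0" by (simp add: n_def)
  show "n (2 * (ja + kb) + 1) = b (2 * kb + 1)" by (simp add: n_def)
qed

lemma splice_ec:
  assumes A: "\<forall>r < 2 * ja. {a r, a (Suc r)} \<in> E" and Am: "mset (pairs a ja) \<subseteq># mset es"
    and B: "walk E b kb" and kb: "kb \<ge> 1" and Bm: "mset (pairs b kb) \<subseteq># mset es"
    and D: "set (pairs a ja) \<inter> set (pairs b kb) = {}"
    and AB: "{a (2 * ja), b 1} \<in> E"
  shows "even_connected E es (a 0) (b (2 * kb + 1))"
proof -
  define n where "n \<equiv> \<lambda>r. if r \<le> 2 * ja then a r else b (r - 2 * ja)"
  note S = L_splice[OF A B AB, folded n_def]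
  have "mset (pairs n (ja + kb)) \<subseteq># mset es"
    unfolding S(2) using disj_union_sub[OF Am Bm] D by simp
  then have "even_connection E es n (ja + kb)" using S(1) kb by (simp add: ec_iff)
  moreover have "n 0 = a 0" "n (2 * (ja + kb) + 1) = b (2 * kb + 1)" by (simp_all add: n_def)
  ultimately show ?thesis unfolding even_connected_def by blast
qed

lemma ec_sym: "even_connected E es a b \<Longrightarrow> even_connected E es b a"
proof -
  assume "even_connected E es a b"
  then obtain p k where ec: "even_connection E es p k" "p 0 = a" "p (2 * k + 1) = b"
    unfolding even_connected_def by blast
  then have w: "walk E p k" "k \<ge> 1" "mset (pairs p k) \<subseteq># mset es" by (auto simp: ec_iff)
  note R = L_rev[OF w(1)]
  have "even_connection E es (\<lambda>r. p (2 * k + 1 - r)) k"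
    using R w by (simp add: ec_iff)
  then show ?thesis unfolding even_connected_def using ec by fastforce
qed

lemma colon_sym: "colon_edge E es a b \<Longrightarrow> colon_edge E es b a"
  unfolding colon_edge_def using ec_sym by (metis insert_commute)

lemma M:
  assumes wp: "walk E p k" and pm: "mset (pairs p k) \<subseteq># mset es"
    and wq: "walk E q m" and qm: "mset (pairs q m) \<subseteq># mset es"
    and qe: "q (2 * m + 1) = p i" and i0: "0 < i" and ik: "i < 2 * k + 1"
  shows "even_connected E es (q 0) (p 0) \<or> even_connected E es (q 0) (p (2 * k + 1))"
proof -
  define PS where "PS = set (pairs p k)"
  have rev_ok: "walk E (\<lambda>r. p (2 * t + 1 - r)) t \<and> mset (pairs (\<lambda>r. p (2 * t + 1 - r)) t) \<subseteq># mset es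
      \<and> set (pairs (\<lambda>r. p (2 * t + 1 - r)) t) \<subseteq> PS" if "t \<le> k" for t
  proof -
    note P = L_prefix[OF wp that]
    note R = L_rev[OF P(1)]
    have "mset (pairs (\<lambda>r. p (2 * t + 1 - r)) t) \<subseteq># mset (pairs p k)"
      unfolding R(2) P(2) by (simp add: mset_take_sub)
    moreover have "set (pairs (\<lambda>r. p (2 * t + 1 - r)) t) \<subseteq> PS"
      unfolding R(2) P(2) PS_def by (simp add: set_take_subset)
    ultimately show ?thesis using R(1) pm by (meson subset_mset.order_trans)
  qed
  have suf_ok: "walk E (\<lambda>r. p (2 * t + r)) (k - t) \<and> mset (pairs (\<lambda>r. p (2 * t + r)) (k - t)) \<subseteq># mset es
      \<and> set (pairs (\<lambda>r. p (2 * t + r)) (k - t)) \<subseteq> PS" if "t \<le> k" for t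
  proof -
    note S = L_suffix[OF wp that]
    have "mset (pairs (\<lambda>r. p (2 * t + r)) (k - t)) \<subseteq># mset (pairs p k)"
      unfolding S(2) by (simp add: mset_drop_sub)
    moreover have "set (pairs (\<lambda>r. p (2 * t + r)) (k - t)) \<subseteq> PS"
      unfolding S(2) PS_def by (simp add: set_drop_subset)
    ultimately show ?thesis using S(1) pm by (meson subset_mset.order_trans)
  qed
  have qedge: "{q r, q (Suc r)} \<in> E" if "r \<le> 2 * m" for r using wq that unfolding walk_def by blast
  show ?thesis
  proof (cases "\<exists>j<m. pairs q m ! j \<in> PS")
    case True
    define j where "j = (LEAST j. j < m \<and> pairs q m ! j \<in> PS)"
    have j: "j < m" "pairs q m ! j \<in> PS" using LeastI_ex[OF True] unfolding j_def by auto
    have jmin: "pairs q m ! j' \<notin> PS" if "j' < j" for j'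
      using not_less_Least[of j' "\<lambda>j. j < m \<and> pairs q m ! j \<in> PS"] that j(1) unfolding j_def by auto
    have Aedge: "\<forall>r < 2 * j. {q r, q (Suc r)} \<in> E" using qedge j(1) by auto
    note QP = L_prefix[OF wq less_imp_le[OF j(1)]]
    have Am: "mset (pairs q j) \<subseteq># mset es"
    proof -
      have "mset (pairs q j) \<subseteq># mset (pairs q m)" unfolding QP(2) by (rule mset_take_sub)
      then show ?thesis using qm by (rule subset_mset.order_trans)
    qed
    have Aset: "set (pairs q j) \<inter> PS = {}"
    proof -
      have "x \<notin> PS" if xin: "x \<in> set (pairs q j)" for x
      proof -
        obtain j' where j': "j' < j" "x = {q (2 * j' + 1), q (2 * j' + 2)}" using xin unfolding set_pairs by blast
        then have "x = pairs q m ! j'" using j(1) by simp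
        then show ?thesis using jmin[OF j'(1)] by simp
      qed
      then show ?thesis by blast
    qed
    obtain t where t: "t < k" "{q (2 * j + 1), q (2 * j + 2)} = {p (2 * t + 1), p (2 * t + 2)}"
      using j(2) j(1) unfolding PS_def set_pairs by auto
    have qe2: "{q (2 * j), q (2 * j + 1)} \<in> E" using qedge j(1) by auto
    from t(2) have "q (2 * j + 1) = p (2 * t + 1) \<or> q (2 * j + 1) = p (2 * t + 2)"
      by (auto simp: doubleton_eq_iff)
    then show ?thesis
    proof
      assume o1: "q (2 * j + 1) = p (2 * t + 1)"
      have tk: "t \<le> k" using t by auto
      have Bw: "walk E (\<lambda>r. p (2 * t + r)) (k - t)"
        and Bm: "mset (pairs (\<lambda>r. p (2 * t + r)) (k - t)) \<subseteq># mset es"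
        and Bs: "set (pairs (\<lambda>r. p (2 * t + r)) (k - t)) \<subseteq> PS"
        using suf_ok[OF tk] by blast+
      have kb: "k - t \<ge> 1" using t by linarith
      have D: "set (pairs q j) \<inter> set (pairs (\<lambda>r. p (2 * t + r)) (k - t)) = {}" using Aset Bs by blast
      have Ed: "{q (2 * j), (\<lambda>r. p (2 * t + r)) 1} \<in> E" using qe2 o1 by simp
      have "even_connected E es (q 0) ((\<lambda>r. p (2 * t + r)) (2 * (k - t) + 1))"
        by (rule splice_ec[OF Aedge Am Bw kb Bm D Ed])
      moreover have "2 * t + (2 * (k - t) + 1) = 2 * k + 1" using t by auto
      ultimately show ?thesis by simp
    next
      assume o2: "q (2 * j + 1) = p (2 * t + 2)"
      have tk: "Suc t \<le> k" using t by auto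
      have Bw: "walk E (\<lambda>r. p (2 * Suc t + 1 - r)) (Suc t)"
        and Bm: "mset (pairs (\<lambda>r. p (2 * Suc t + 1 - r)) (Suc t)) \<subseteq># mset es"
        and Bs: "set (pairs (\<lambda>r. p (2 * Suc t + 1 - r)) (Suc t)) \<subseteq> PS"
        using rev_ok[OF tk] by blast+
      have kb: "Suc t \<ge> 1" by simp
      have D: "set (pairs q j) \<inter> set (pairs (\<lambda>r. p (2 * Suc t + 1 - r)) (Suc t)) = {}" using Aset Bs by blast
      have "2 * Suc t + 1 - 1 = 2 * t + 2" by simp
      then have Ed: "{q (2 * j), (\<lambda>r. p (2 * Suc t + 1 - r)) 1} \<in> E" using qe2 o2 by simp
      have "even_connected E es (q 0) ((\<lambda>r. p (2 * Suc t + 1 - r)) (2 * Suc t + 1))"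
        by (rule splice_ec[OF Aedge Am Bw kb Bm D Ed])
      then show ?thesis by simp
    qed
  next
    case False
    have Aedge: "\<forall>r < 2 * m. {q r, q (Suc r)} \<in> E" using qedge by auto
    have Aset: "set (pairs q m) \<inter> PS = {}"
    proof -
      have "x \<notin> PS" if xin: "x \<in> set (pairs q m)" for x
      proof -
        obtain j' where j': "j' < m" "x = {q (2 * j' + 1), q (2 * j' + 2)}" using xin unfolding set_pairs by blast
        then have "x = pairs q m ! j'" by simp
        then show ?thesis using False j'(1) by blast
      qed
      then show ?thesis by blast
    qed
    have qe2: "{q (2 * m), q (2 * m + 1)} \<in> E" using qedge by auto
    show ?thesis
    proof (cases "odd i")
      case True
      then obtain l where l: "i = 2 * l + 1" by (meson oddE)
      have lk: "l \<le> k" "l < k" using l ik by auto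
      have Bw: "walk E (\<lambda>r. p (2 * l + r)) (k - l)"
        and Bm: "mset (pairs (\<lambda>r. p (2 * l + r)) (k - l)) \<subseteq># mset es"
        and Bs: "set (pairs (\<lambda>r. p (2 * l + r)) (k - l)) \<subseteq> PS"
        using suf_ok[OF lk(1)] by blast+
      have kb: "k - l \<ge> 1" using lk by linarith
      have D: "set (pairs q m) \<inter> set (pairs (\<lambda>r. p (2 * l + r)) (k - l)) = {}" using Aset Bs by blast
      have Ed: "{q (2 * m), (\<lambda>r. p (2 * l + r)) 1} \<in> E" using qe2 qe l by simp
      have "even_connected E es (q 0) ((\<lambda>r. p (2 * l + r)) (2 * (k - l) + 1))"
        by (rule splice_ec[OF Aedge qm Bw kb Bm D Ed])
      moreover have "2 * l + (2 * (k - l) + 1) = 2 * k + 1" using lk by auto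
      ultimately show ?thesis by simp
    next
      case False
      then obtain l where l: "i = 2 * l" by (meson evenE)
      have lk: "l \<le> k" "l \<ge> 1" using l ik i0 by auto
      have Bw: "walk E (\<lambda>r. p (2 * l + 1 - r)) l"
        and Bm: "mset (pairs (\<lambda>r. p (2 * l + 1 - r)) l) \<subseteq># mset es"
        and Bs: "set (pairs (\<lambda>r. p (2 * l + 1 - r)) l) \<subseteq> PS"
        using rev_ok[OF lk(1)] by blast+
      have D: "set (pairs q m) \<inter> set (pairs (\<lambda>r. p (2 * l + 1 - r)) l) = {}" using Aset Bs by blast
      have Ed: "{q (2 * m), (\<lambda>r. p (2 * l + 1 - r)) 1} \<in> E" using qe2 qe l by simp
      have "even_connected E es (q 0) ((\<lambda>r. p (2 * l + 1 - r)) (2 * l + 1))"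
        by (rule splice_ec[OF Aedge qm Bw lk(2) Bm D Ed])
      then show ?thesis by simp
    qed
  qed
qed

theorem lemma4p3:
  fixes V :: "'a set" and E :: "'a set set" and x y :: "nat \<Rightarrow> 'a" and h s k i :: nat
    and es :: "'a set list" and p :: "nat \<Rightarrow> 'a" and u v w :: 'a
  assumes vwc: "very_well_covered V E"
    and inj_x: "inj_on x {1..h}" and inj_y: "inj_on y {1..h}"
    and disj: "x ` {1..h} \<inter> y ` {1..h} = {}"
    and V_eq: "V = x ` {1..h} \<union> y ` {1..h}"
    and mvc: "minimal_vertex_cover V E (x ` {1..h})"
    and mis: "maximal_independent_set V E (y ` {1..h})"
    and xy_edges: "\<forall>j\<in>{1..h}. {x j, y j} \<in> E"
    and s_pos: "s \<ge> 1" and es_len: "length es = s" and es_E: "set es \<subseteq> E"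
    and ec: "even_connection E es p k" and u_def: "p 0 = u" and v_def: "p (2 * k + 1) = v"
    and i_le: "i \<le> 2 * k + 1"
    and w_V: "w \<in> V" and w_ne: "w \<noteq> p i"
    and w_edge: "colon_edge E es w (p i)"
  shows "colon_edge E es u w \<or> colon_edge E es v w"
proof -
  have wp: "walk E p k" "mset (pairs p k) \<subseteq># mset es" using ec by (auto simp: ec_iff)
  consider "i = 0" | "i = 2 * k + 1" | "0 < i" "i < 2 * k + 1" using i_le by linarith
  then show ?thesis
  proof cases
    case 1 then show ?thesis using colon_sym[OF w_edge] u_def by simp
  next
    case 2 then show ?thesis using colon_sym[OF w_edge] v_def by simp
  next
    case 3
    obtain q m where q: "walk E q m" "mset (pairs q m) \<subseteq># mset es" "q 0 = w" "q (2 * m + 1) = p i"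
    proof (cases "{w, p i} \<in> E")
      case True
      show ?thesis
        by (rule that[of "\<lambda>r. if r = 0 then w else p i" 0]) (use True in \<open>auto simp: walk_def pairs_def\<close>)
    next
      case False
      then have "even_connected E es w (p i)" using w_edge unfolding colon_edge_def by blast
      then obtain q m where "even_connection E es q m" "q 0 = w" "q (2 * m + 1) = p i"
        unfolding even_connected_def by blast
      then show ?thesis using that by (auto simp: ec_iff)
    qed
    have "even_connected E es (q 0) (p 0) \<or> even_connected E es (q 0) (p (2 * k + 1))"
      by (rule M[OF wp q(1,2,4) 3])
    then have "even_connected E es w u \<or> even_connected E es w v"
      unfolding q(3) u_def v_def .
    then have "even_connected E es u w \<or> even_connected E es v w"
      using ec_sym by metis
    then show ?thesis unfolding colon_edge_def by blast
  qed
qed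

end
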